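(* Let $\mu\ge1$. The prefix-average comparator for $\ge$ over $\{0,\dots,\mu\}$, i.e. the language of pairs $(A,B)$ of sequences in $\{0,\dots,\mu\}^\omega$ (read synchronously as words over $\{0,\dots,\mu\}^2$) with $\mathrm{PLA}(A)\ge\mathrm{PLA}(B)$, is not $\omega$-regular.
   Context: $\mathrm{Sum}(M[0,n-1])=\sum_{j=0}^{n-1}M[j]$. Prefix-average comparison: $\mathrm{PLA}(A)\ge\mathrm{PLA}(B)$ holds iff there are only finitely many indices $i$ with $\mathrm{Sum}(B[0,i-1])\ge\mathrm{Sum}(A[0,i-1])$ and infinitely many indices $i$ with $\mathrm{Sum}(A[0,i-1])>\mathrm{Sum}(B[0,i-1])$. *)

theory Defs
  imports Main
begin

definition prefix_sum :: "(nat \<Rightarrow> nat) \<Rightarrow> nat \<Rightarrow> nat" where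
  "prefix_sum M n = (\<Sum>j<n. M j)"

definition PLA_ge :: "(nat \<Rightarrow> nat) \<Rightarrow> (nat \<Rightarrow> nat) \<Rightarrow> bool" where
  "PLA_ge A B \<longleftrightarrow>
     finite {i. prefix_sum B i \<ge> prefix_sum A i} \<and>
     infinite {i. prefix_sum A i > prefix_sum B i}"

definition alph :: "nat \<Rightarrow> (nat \<times> nat) set" where
  "alph mu = {0..mu} \<times> {0..mu}"

definition PLA_comparator :: "nat \<Rightarrow> (nat \<Rightarrow> nat \<times> nat) set" where
  "PLA_comparator mu =
     {w. (\<forall>i. w i \<in> alph mu) \<and> PLA_ge (fst \<circ> w) (snd \<circ> w)}"

definition buchi_accepts ::
  "nat set \<Rightarrow> nat set \<Rightarrow> (nat \<times> 'a \<times> nat) set \<Rightarrow> nat set \<Rightarrow> (nat \<Rightarrow> 'a) \<Rightarrow> bool" where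
  "buchi_accepts Q I delta F w \<longleftrightarrow>
     (\<exists>r. r 0 \<in> I \<and> (\<forall>i. r i \<in> Q \<and> (r i, w i, r (Suc i)) \<in> delta) \<and>
          (\<exists>\<^sub>\<infinity>i. r i \<in> F))"

definition omega_regular :: "'a set \<Rightarrow> (nat \<Rightarrow> 'a) set \<Rightarrow> bool" where
  "omega_regular S L \<longleftrightarrow>
     L \<subseteq> {w. \<forall>i. w i \<in> S} \<and>
     (\<exists>Q I delta F. finite Q \<and> I \<subseteq> Q \<and> F \<subseteq> Q \<and> delta \<subseteq> Q \<times> S \<times> Q \<and>
        (\<forall>w. (\<forall>i. w i \<in> S) \<longrightarrow> (w \<in> L \<longleftrightarrow> buchi_accepts Q I delta F w)))"

end

theory Submission
  imports Defs "HOL-Library.Infinite_Set"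
begin

lemma run_reindex:
  assumes run: "\<forall>n. r n \<in> Q \<and> (r n, w n, r (Suc n)) \<in> delta"
    and "r (g 0) \<in> I" and step: "\<forall>n. r (g (Suc n)) = r (Suc (g n))"
    and inf: "\<exists>\<^sub>\<infinity>n. r (g n) \<in> F"
  shows "buchi_accepts Q I delta F (w \<circ> g)"
  unfolding buchi_accepts_def
proof (intro exI[of _ "r \<circ> g"] conjI allI)
  fix n
  show "(r \<circ> g) n \<in> Q" using run by simp
  show "((r \<circ> g) n, (w \<circ> g) n, (r \<circ> g) (Suc n)) \<in> delta"
    using run step by (metis comp_apply)
qed (use assms in auto)

lemma sum_add_split:
  fixes f :: "nat \<Rightarrow> 'b::comm_monoid_add"
  shows "(\<Sum>k<n+L. f k) = (\<Sum>k<n. f k) + (\<Sum>t<L. f (n+t))"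
  by (induction L) (auto simp: add.assoc)

lemma prefix_sum_Suc: "prefix_sum M (Suc n) = prefix_sum M n + M n"
  by (simp add: prefix_sum_def)

definition wK :: "nat \<Rightarrow> nat \<Rightarrow> nat \<times> nat" where
  "wK K n = (if n < K+1 then (1,0) else if (n - (K+1)) mod (2*K) < K then (0,1) else (1,0))"

definition DD :: "(nat \<Rightarrow> nat \<times> nat) \<Rightarrow> nat \<Rightarrow> int" where
  "DD w n = int (prefix_sum (fst \<circ> w) n) - int (prefix_sum (snd \<circ> w) n)"

lemma DD_Suc: "DD w (Suc n) = DD w n + int (fst (w n)) - int (snd (w n))"
  by (simp add: DD_def prefix_sum_Suc)

lemma DD_init: "n \<le> K+1 \<Longrightarrow> DD (wK K) n = int n"
  by (induction n) (auto simp: DD_def prefix_sum_def wK_def DD_Suc[unfolded DD_def])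

lemma wK_letter:
  assumes "t < 2*K"
  shows "wK K (K+1+2*K*m + t) = (if t<K then (0,1) else (1,0))"
proof -
  have "(K+1+2*K*m + t - (K+1)) mod (2*K) = t" using assms by simp
  then show ?thesis unfolding wK_def by auto
qed

lemma DD_block:
  assumes "t \<le> 2*K"
  shows "DD (wK K) (K+1+2*K*m + t) = DD (wK K) (K+1+2*K*m) + (if t \<le> K then - int t else int t - 2*int K)"
  using assms
proof (induction t)
  case 0
  then show ?case by simp
next
  case (Suc t)
  have "DD (wK K) (K+1+2*K*m + Suc t) = DD (wK K) (K+1+2*K*m + t) + int (fst (wK K (K+1+2*K*m + t))) - int (snd (wK K (K+1+2*K*m + t)))"
    by (simp add: DD_Suc[symmetric])
  also have "\<dots> = DD (wK K) (K+1+2*K*m + t) + (if t < K then -1 else 1)"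
    using wK_letter[of t K m] Suc.prems by auto
  finally show ?case using Suc by auto
qed

lemma DD_p: "K \<ge> 1 \<Longrightarrow> DD (wK K) (K+1+2*K*m) = int K + 1"
proof (induction m)
  case 0
  then show ?case using DD_init[of "K+1" K] by simp
next
  case (Suc m)
  have "K+1+2*K*Suc m = K+1+2*K*m + 2*K" by simp
  then show ?case using DD_block[of "2*K" K m] Suc by simp
qed

lemma DD_pos:
  assumes "K \<ge> 1" "n \<ge> 1"
  shows "DD (wK K) n \<ge> 1"
proof (cases "n \<le> K+1")
  case True
  then show ?thesis using DD_init assms by simp
next
  case False
  define m where "m = (n - (K+1)) div (2*K)"
  define t where "t = (n - (K+1)) mod (2*K)"
  have n: "n = K+1+2*K*m + t" using False unfolding m_def t_def by simp
  have "t < 2*K" using assms unfolding t_def by simp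
  then show ?thesis using n DD_block[of t K m] DD_p[OF assms(1), of m] by auto
qed

lemma wK_in: "K \<ge> 1 \<Longrightarrow> wK K \<in> PLA_comparator mu \<longleftrightarrow> (\<forall>i. wK K i \<in> alph mu)"
proof -
  assume K: "K \<ge> 1"
  have "{i. prefix_sum (snd \<circ> wK K) i \<ge> prefix_sum (fst \<circ> wK K) i} \<subseteq> {0}"
    using DD_pos[OF K] unfolding DD_def by (force simp: not_less_eq_eq)
  hence f: "finite {i. prefix_sum (snd \<circ> wK K) i \<ge> prefix_sum (fst \<circ> wK K) i}"
    using finite_subset by blast
  have "{1..} \<subseteq> {i. prefix_sum (fst \<circ> wK K) i > prefix_sum (snd \<circ> wK K) i}"
    using DD_pos[OF K] unfolding DD_def by force
  moreover have "infinite {1::nat..}" by (rule infinite_Ici)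
  ultimately have "infinite {i. prefix_sum (fst \<circ> wK K) i > prefix_sum (snd \<circ> wK K) i}"
    using finite_subset by blast
  with f show ?thesis unfolding PLA_comparator_def PLA_ge_def by auto
qed

theorem theorem19:
  fixes mu :: nat
  assumes "mu \<ge> 1"
  shows "\<not> omega_regular (alph mu) (PLA_comparator mu)"
proof
  assume "omega_regular (alph mu) (PLA_comparator mu)"
  then obtain Q I delta F where finQ: "finite Q" and
    iff: "\<forall>w. (\<forall>i. w i \<in> alph mu) \<longrightarrow> (w \<in> PLA_comparator mu \<longleftrightarrow> buchi_accepts Q I delta F w)"
    unfolding omega_regular_def by blast
  define K where "K = card Q + 1"
  have K1: "K \<ge> 1" by (simp add: K_def)
  define w where "w = wK K"
  have walph: "\<forall>i. w i \<in> alph mu" using assms by (auto simp: w_def wK_def alph_def)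
  have "w \<in> PLA_comparator mu" using wK_in[OF K1] walph w_def by simp
  then have "buchi_accepts Q I delta F w" using iff walph by blast
  then obtain r where r0: "r 0 \<in> I" and run: "\<forall>i. r i \<in> Q \<and> (r i, w i, r (Suc i)) \<in> delta"
    and infF: "\<exists>\<^sub>\<infinity>i. r i \<in> F"
    unfolding buchi_accepts_def by blast
  define p where "p m = K+1+2*K*m" for m
  have "finite ((\<lambda>m. r (p m)) ` UNIV)"
  proof -
    have "(\<lambda>m. r (p m)) ` UNIV \<subseteq> Q" using run by auto
    thus ?thesis using finQ finite_subset by blast
  qed
  then obtain q where infM: "infinite ((\<lambda>m. r (p m)) -` {q})"
    using inf_img_fin_domE infinite_UNIV_nat by blast
  define M where "M = (\<lambda>m. r (p m)) -` {q}"
  obtain m1 where m1: "m1 \<in> M" using infM unfolding M_def infinite_nat_iff_unbounded by blast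
  obtain k where k: "k \<ge> p m1" "r k \<in> F" using infF unfolding INFM_nat_le by blast
  obtain m2 where m2: "m2 > k" "m2 \<in> M" using infM unfolding M_def infinite_nat_iff_unbounded by blast
  have "1*m2 \<le> K*m2" using K1 by (rule mult_le_mono1)
  moreover have "K*m2 \<le> 2*K*m2" by simp
  ultimately have "p m2 \<ge> m2" unfolding p_def by linarith
  hence kj: "k < p m2" using m2 by simp
  have "m1 < m2"
  proof (rule ccontr)
    assume "\<not> m1 < m2"
    hence "p m2 \<le> p m1" unfolding p_def by simp
    thus False using kj k by simp
  qed
  define i where "i = p m1"
  define j where "j = p m2"
  have rij: "r i = r j" using m1 m2 unfolding M_def i_def j_def by simp
  have ji: "j \<ge> i + 2*K"
  proof -
    have "m1 + 1 \<le> m2" using \<open>m1 < m2\<close> by simp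
    hence "2*K*(m1+1) \<le> 2*K*m2" by (rule mult_le_mono2)
    hence "2*K*m2 \<ge> 2*K*m1 + 2*K" by (simp add: algebra_simps)
    thus ?thesis unfolding i_def j_def p_def by simp
  qed
  have ipos: "i > 0" unfolding i_def p_def by simp
  have "\<not> inj_on (\<lambda>t. r (i+t)) {0..card Q}"
  proof
    assume inj: "inj_on (\<lambda>t. r (i+t)) {0..card Q}"
    have "(\<lambda>t. r (i+t)) ` {0..card Q} \<subseteq> Q" using run by auto
    hence "card ((\<lambda>t. r (i+t)) ` {0..card Q}) \<le> card Q" using finQ card_mono by blast
    thus False using card_image[OF inj] by simp
  qed
  then obtain x y where xy: "x \<in> {0..card Q}" "y \<in> {0..card Q}" "r (i+x) = r (i+y)" "x \<noteq> y"
    unfolding inj_on_def by blast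
  define t1 where "t1 = min x y"
  define t2 where "t2 = max x y"
  have t12: "t1 < t2" "t2 \<le> card Q" "r (i+t1) = r (i+t2)"
    using xy unfolding t1_def t2_def by (auto simp: min_def max_def)
  define a where "a = i + t1"
  define b where "b = i + t2"
  have rab: "r a = r b" using t12 a_def b_def by simp
  have ab: "i \<le> a" "a < b" "i < b" "b < j" using t12 ji unfolding a_def b_def K_def by auto
  define L where "L = (b - i) + (j - a)"
  have Lpos: "L > 0" using ab unfolding L_def by simp
  define seg where "seg t = (if t < b - i then i + t else a + (t - (b-i)))" for t
  define g where "g n = (if n < i then n else seg ((n - i) mod L))" for n
  have g0: "g 0 = 0" using ipos unfolding g_def by simp
  have gmod: "g (i + m*L + t) = seg t" if "t < L" for m t
    using that unfolding g_def by simp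
  have step: "\<forall>n. r (g (Suc n)) = r (Suc (g n))"
  proof
    fix n
    show "r (g (Suc n)) = r (Suc (g n))"
    proof (cases "Suc n < i")
      case True
      then show ?thesis unfolding g_def by simp
    next
      case False
      show ?thesis
      proof (cases "Suc n = i")
        case True
        then show ?thesis using ab unfolding g_def seg_def by simp
      next
        case False2: False
        hence ni: "n \<ge> i" using False by simp
        define s where "s = (n - i) mod L"
        have sL: "s < L" using Lpos unfolding s_def by simp
        have gn: "g n = seg s" using ni unfolding g_def s_def by simp
        have gSn: "g (Suc n) = seg (if Suc s = L then 0 else Suc s)"
          using ni unfolding g_def s_def by (simp add: Suc_diff_le mod_Suc)
        show ?thesis
        proof (cases "Suc s = L")
          case True
          have "seg s = j - 1" using True ab unfolding seg_def L_def by auto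
          hence "Suc (seg s) = j" using ab by simp
          moreover have "seg 0 = i" using ab unfolding seg_def by simp
          ultimately show ?thesis using gn gSn True rij by simp
        next
          case False3: False
          show ?thesis
          proof (cases "Suc s < b - i")
            case True
            then show ?thesis using gn gSn False3 unfolding seg_def by simp
          next
            case False4: False
            show ?thesis
            proof (cases "Suc s = b - i")
              case True
              have "seg s = b - 1" using True ab unfolding seg_def by auto
              moreover have "seg (Suc s) = a" using True unfolding seg_def by simp
              ultimately show ?thesis using gn gSn False3 rab ab by simp
            next
              case False
              hence sb: "s \<ge> b - i" using False4 by simp
              have "seg (Suc s) = Suc (seg s)" using sb unfolding seg_def by (simp add: Suc_diff_le)
              then show ?thesis using gn gSn False3 by simp
            qed
          qed
        qed
      qed
    qed
  qed
  have infG: "\<exists>\<^sub>\<infinity>n. r (g n) \<in> F"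
    unfolding INFM_nat
  proof
    fix m0
    define off where "off = (if k < b then k - i else (b-i) + (k-a))"
    have offL: "off < L" using k kj ab unfolding off_def L_def i_def j_def by auto
    have segoff: "seg off = k" using k ab unfolding off_def seg_def i_def by auto
    have "i + (m0+1)*L + off > m0"
    proof -
      have "(m0+1)*1 \<le> (m0+1)*L" using Lpos by (intro mult_le_mono2) simp
      thus ?thesis by simp
    qed
    moreover have "r (g (i + (m0+1)*L + off)) \<in> F" using gmod[OF offL, of "m0+1"] segoff k by simp
    ultimately show "\<exists>n>m0. r (g n) \<in> F" by blast
  qed
  have "buchi_accepts Q I delta F (w \<circ> g)"
    by (rule run_reindex[OF run _ step infG]) (simp add: g0 r0)
  moreover have "\<forall>n. (w \<circ> g) n \<in> alph mu" using walph by simp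
  ultimately have "w \<circ> g \<in> PLA_comparator mu" using iff by blast
  hence finS: "finite {n. prefix_sum (snd \<circ> (w \<circ> g)) n \<ge> prefix_sum (fst \<circ> (w \<circ> g)) n}"
    unfolding PLA_comparator_def PLA_ge_def by simp
  define \<sigma> where "\<sigma> h = (\<Sum>t<b-i. h (w (i+t))) + (\<Sum>t<j-a. h (w (a+t)))" for h :: "nat \<times> nat \<Rightarrow> nat"
  have PSg: "prefix_sum (h \<circ> (w \<circ> g)) (i + m*L) = prefix_sum (h \<circ> w) i + m * \<sigma> h" for h m
  proof (induction m)
    case 0
    then show ?case unfolding prefix_sum_def g_def by simp
  next
    case (Suc m)
    have "prefix_sum (h \<circ> (w \<circ> g)) (i + Suc m*L) = prefix_sum (h \<circ> (w \<circ> g)) (i + m*L + L)"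
    proof -
      have "i + Suc m*L = i + m*L + L" by simp
      thus ?thesis by (rule arg_cong)
    qed
    also have "\<dots> = prefix_sum (h \<circ> (w \<circ> g)) (i + m*L) + (\<Sum>t<L. h (w (g (i + m*L + t))))"
      unfolding prefix_sum_def using sum_add_split[of "h \<circ> (w \<circ> g)" "i+m*L" L] by simp
    also have "(\<Sum>t<L. h (w (g (i + m*L + t)))) = (\<Sum>t<L. h (w (seg t)))"
      using gmod by (intro sum.cong) auto
    also have "\<dots> = (\<Sum>t<b-i. h (w (seg t))) + (\<Sum>t<j-a. h (w (seg (b-i+t))))"
      unfolding L_def by (rule sum_add_split)
    also have "\<dots> = \<sigma> h"
    proof -
      have "(\<Sum>t<b-i. h (w (seg t))) = (\<Sum>t<b-i. h (w (i+t)))"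
        by (rule sum.cong) (auto simp: seg_def)
      moreover have "(\<Sum>t<j-a. h (w (seg (b-i+t)))) = (\<Sum>t<j-a. h (w (a+t)))"
        by (rule sum.cong) (auto simp: seg_def)
      ultimately show ?thesis unfolding \<sigma>_def by simp
    qed
    finally show ?case using Suc by simp
  qed
  have split: "prefix_sum (h \<circ> w) y = prefix_sum (h \<circ> w) x + (\<Sum>t<y-x. h (w (x+t)))" if "x \<le> y" for h x y
  proof -
    have "prefix_sum (h \<circ> w) y = (\<Sum>k<x + (y-x). (h \<circ> w) k)"
      unfolding prefix_sum_def using that by simp
    also have "\<dots> = (\<Sum>k<x. (h \<circ> w) k) + (\<Sum>t<y-x. (h \<circ> w) (x+t))"
      by (rule sum_add_split)
    finally show ?thesis by (simp add: prefix_sum_def)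
  qed
  have Di: "DD w i = int K + 1" and Dj: "DD w j = int K + 1"
    using DD_p[OF K1] unfolding w_def i_def j_def p_def by auto
  have t1K: "t1 \<le> K" "t1 \<le> 2*K" "t2 \<le> K" "t2 \<le> 2*K" using t12 by (simp_all add: K_def)
  have aeq: "a = K+1+2*K*m1 + t1" by (simp add: a_def i_def p_def)
  have beq: "b = K+1+2*K*m1 + t2" by (simp add: b_def i_def p_def)
  have Da: "DD w a = int K + 1 - int t1"
    unfolding aeq w_def using DD_block[OF t1K(2), of m1] DD_p[OF K1, of m1] t1K(1) by simp
  have Db: "DD w b = int K + 1 - int t2"
    unfolding beq w_def using DD_block[OF t1K(4), of m1] DD_p[OF K1, of m1] t1K(3) by simp
  have spl1: "int (prefix_sum (h \<circ> w) b) = int (prefix_sum (h \<circ> w) i) + int (\<Sum>t<b-i. h (w (i+t)))" for h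
    using split[of i b h] ab by simp
  have spl2: "int (prefix_sum (h \<circ> w) j) = int (prefix_sum (h \<circ> w) a) + int (\<Sum>t<j-a. h (w (a+t)))" for h
    using split[of a j h] ab by simp
  have sig: "int (\<sigma> snd) - int (\<sigma> fst) = int t2 - int t1"
  proof -
    have "int (\<sigma> h) = (int (prefix_sum (h \<circ> w) b) - int (prefix_sum (h \<circ> w) i)) + (int (prefix_sum (h \<circ> w) j) - int (prefix_sum (h \<circ> w) a))" for h
      unfolding \<sigma>_def using spl1[of h] spl2[of h] by simp
    hence "int (\<sigma> fst) - int (\<sigma> snd) = (DD w b - DD w i) + (DD w j - DD w a)"
      unfolding DD_def by simp
    thus ?thesis using Di Dj Da Db by simp
  qed
  have inS: "i + m*L \<in> {n. prefix_sum (snd \<circ> (w \<circ> g)) n \<ge> prefix_sum (fst \<circ> (w \<circ> g)) n}"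
    if "m \<ge> K+1" for m
  proof -
    have eq: "int (prefix_sum (snd \<circ> (w \<circ> g)) (i + m*L)) - int (prefix_sum (fst \<circ> (w \<circ> g)) (i + m*L))
       = - DD w i + int m * (int (\<sigma> snd) - int (\<sigma> fst))"
    proof -
      have e1: "int (prefix_sum (h \<circ> (w \<circ> g)) (i + m*L)) = int (prefix_sum (h \<circ> w) i) + int m * int (\<sigma> h)" for h
        by (simp add: PSg)
      show ?thesis unfolding e1 DD_def right_diff_distrib by linarith
    qed
    have ge: "int m * (int (\<sigma> snd) - int (\<sigma> fst)) \<ge> int m * 1"
      using sig t12 by (intro mult_left_mono) auto
    have "int (prefix_sum (snd \<circ> (w \<circ> g)) (i + m*L)) - int (prefix_sum (fst \<circ> (w \<circ> g)) (i + m*L)) \<ge> 0"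
      using eq ge Di that by linarith
    thus ?thesis by simp
  qed
  have "infinite {n. prefix_sum (snd \<circ> (w \<circ> g)) n \<ge> prefix_sum (fst \<circ> (w \<circ> g)) n}"
    unfolding infinite_nat_iff_unbounded
  proof
    fix m0
    have "i + (m0 + K + 1)*L > m0"
    proof -
      have "(m0+K+1)*1 \<le> (m0+K+1)*L" using Lpos by (intro mult_le_mono2) simp
      hence "m0+K+1 \<le> (m0+K+1)*L" by (simp only: mult_1_right)
      thus ?thesis by linarith
    qed
    moreover have "i + (m0 + K + 1)*L \<in> {n. prefix_sum (snd \<circ> (w \<circ> g)) n \<ge> prefix_sum (fst \<circ> (w \<circ> g)) n}"
      by (rule inS) simp
    ultimately show "\<exists>n>m0. n \<in> {n. prefix_sum (snd \<circ> (w \<circ> g)) n \<ge> prefix_sum (fst \<circ> (w \<circ> g)) n}"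
      by blast
  qed
  with finS show False by blast
qed

end
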